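(* Let $\delta\in\mathbb{Z}$ and let $\lambda,\mu$ be bipartitions. (i) $\mu\in\operatorname{Rem}^\bullet(\lambda)$ (equivalently $\lambda\in\operatorname{Add}^\bullet(\mu)$) if and only if the following holds. The labels of $x_\lambda(\delta)$ and $x_\mu(\delta)$ agree at all vertices except for one pair of adjacent vertices $j,j+1$. At that pair, the labels (read at $j$, then at $j+1$) are one of the following four cases: - $x_\mu(\delta)$ is $(\times,\bigcirc)$ and $x_\lambda(\delta)$ is $(\vee,\wedge)$; - $x_\mu(\delta)$ is $(\wedge,\bigcirc)$ and $x_\lambda(\delta)$ is $(\bigcirc,\wedge)$; - $x_\mu(\delta)$ is $(\times,\vee)$ and $x_\lambda(\delta)$ is $(\vee,\times)$; - $x_\mu(\delta)$ is $(\wedge,\vee)$ and $x_\lambda(\delta)$ is $(\bigcirc,\times)$. (ii) $\mu\in\operatorname{Rem}^\circ(\lambda)$ (equivalently $\lambda\in\operatorname{Add}^\circ(\mu)$) if and only if the following holds. The labels of $x_\lambda(\delta)$ and $x_\mu(\delta)$ agree at all vertices except for one pair of adjacent vertices $j,j+1$. At that pair, the labels are one of the following four cases: - $x_\mu(\delta)$ is $(\bigcirc,\times)$ and $x_\lambda(\delta)$ is $(\vee,\wedge)$; - $x_\mu(\delta)$ is $(\bigcirc,\vee)$ and $x_\lambda(\delta)$ is $(\vee,\bigcirc)$; - $x_\mu(\delta)$ is $(\wedge,\times)$ and $x_\lambda(\delta)$ is $(\times,\wedge)$; - $x_\mu(\delta)$ is $(\wedge,\vee)$ and $x_\lambda(\delta)$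 is $(\times,\bigcirc)$.
   Context: A partition is a weakly decreasing sequence $\alpha=(\alpha_1,\alpha_2,\dots)$ of nonnegative integers, almost all zero. A bipartition is a pair $\lambda=(\lambda^\bullet,\lambda^\circ)$ of partitions. $\operatorname{Add}^\bullet(\lambda)$ (resp. $\operatorname{Add}^\circ(\lambda)$) is the set of bipartitions obtained from $\lambda$ by adding one box to the Young diagram of $\lambda^\bullet$ (resp. $\lambda^\circ$). $\operatorname{Rem}^\bullet(\lambda)$ and $\operatorname{Rem}^\circ(\lambda)$ are defined likewise by removing one box. For a parameter $\delta$ and bipartition $\lambda$, set $I_\wedge(\lambda)=\{\lambda^\bullet_i-(i-1): i\ge1\}$ and $I_\vee(\lambda,\delta)=\{i-\delta-\lambda^\circ_i: i\ge1\}$. The weight diagram $x_\lambda(\delta)$ labels each integer vertex $j$ of the number line by: - $\bigcirc$ if $j\notin I_\wedge(\lambda)\cup I_\vee(\lambda,\delta)$; - $\wedge$ if $j\in I_\wedge(\lambda)\setminus I_\vee(\lambda,\delta)$; - $\vee$ if $j\in I_\vee(\lambda,\delta)\setminus I_\wedge(\lambda)$; - $\times$ if $j\in I_\wedge(\lambda)\cap I_\vee(\lambda,\delta)$. *)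

theory Defs
  imports Main
begin

text \<open>A partition (alpha_1, alpha_2, ...) is stored as a function a :: nat => nat
  with a (i - 1) = alpha_i, i.e. 0-based storage of the 1-based sequence.\<close>

definition is_partition :: "(nat \<Rightarrow> nat) \<Rightarrow> bool" where
  "is_partition a \<longleftrightarrow> (\<forall>i. a (Suc i) \<le> a i) \<and> finite {i. a i \<noteq> 0}"

type_synonym bipartition = "(nat \<Rightarrow> nat) \<times> (nat \<Rightarrow> nat)"

definition is_bipartition :: "bipartition \<Rightarrow> bool" where
  "is_bipartition l \<longleftrightarrow> is_partition (fst l) \<and> is_partition (snd l)"

definition add_box :: "(nat \<Rightarrow> nat) \<Rightarrow> (nat \<Rightarrow> nat) set" where
  "add_box a = {b. is_partition b \<and> (\<exists>k. b = a(k := Suc (a k)))}"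

definition rem_box :: "(nat \<Rightarrow> nat) \<Rightarrow> (nat \<Rightarrow> nat) set" where
  "rem_box a = {b. is_partition b \<and> (\<exists>k. 0 < a k \<and> b = a(k := a k - 1))}"

definition Add_bullet :: "bipartition \<Rightarrow> bipartition set" where
  "Add_bullet l = {(b, snd l) | b. b \<in> add_box (fst l)}"

definition Add_circ :: "bipartition \<Rightarrow> bipartition set" where
  "Add_circ l = {(fst l, b) | b. b \<in> add_box (snd l)}"

definition Rem_bullet :: "bipartition \<Rightarrow> bipartition set" where
  "Rem_bullet l = {(b, snd l) | b. b \<in> rem_box (fst l)}"

definition Rem_circ :: "bipartition \<Rightarrow> bipartition set" where
  "Rem_circ l = {(fst l, b) | b. b \<in> rem_box (snd l)}"

definition I_wedge :: "bipartition \<Rightarrow> int set" where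
  "I_wedge l = {int (fst l (i - 1)) - (int i - 1) | i. i \<ge> 1}"

definition I_vee :: "bipartition \<Rightarrow> int \<Rightarrow> int set" where
  "I_vee l \<delta> = {int i - \<delta> - int (snd l (i - 1)) | i. i \<ge> 1}"

datatype label = Circ | Wedge | Vee | Cross

definition weight_diagram :: "bipartition \<Rightarrow> int \<Rightarrow> int \<Rightarrow> label" where
  "weight_diagram l \<delta> j =
     (if j \<in> I_wedge l \<and> j \<in> I_vee l \<delta> then Cross
      else if j \<in> I_wedge l then Wedge
      else if j \<in> I_vee l \<delta> then Vee
      else Circ)"

end

theory Submission
  imports Defs
begin


definition sq :: "(nat \<Rightarrow> nat) \<Rightarrow> nat \<Rightarrow> int" where
  "sq a k = int (a k) - int k"

definition R :: "(nat \<Rightarrow> nat) \<Rightarrow> int set" where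
  "R a = range (sq a)"

lemma sq_Suc: "is_partition a \<Longrightarrow> sq a (Suc k) < sq a k"
  unfolding is_partition_def sq_def by (smt (verit) of_nat_Suc of_nat_mono)

lemma sq_less: assumes "is_partition a" "m < n" shows "sq a n < sq a m"
  using assms(2)
proof (induction n)
  case 0 then show ?case by simp
next
  case (Suc n)
  then show ?case using sq_Suc[OF assms(1), of n] by (cases "m = n") auto
qed

lemma sq_le: "is_partition a \<Longrightarrow> m \<le> n \<Longrightarrow> sq a n \<le> sq a m"
  using sq_less by (metis le_less order_refl)

lemma sq_inj: "is_partition a \<Longrightarrow> sq a m = sq a n \<Longrightarrow> m = n"
  using sq_less by (metis less_irrefl linorder_neqE_nat)

lemma R_inj:
  assumes a: "is_partition a" and b: "is_partition b" and e: "R a = R b"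
  shows "a = b"
proof -
  have "sq a k = sq b k" for k
  proof (induction k rule: less_induct)
    case (less k)
    obtain m where m: "sq b k = sq a m" using e unfolding R_def by (metis rangeE rangeI)
    obtain m' where m': "sq a k = sq b m'" using e unfolding R_def by (metis rangeE rangeI)
    have "m \<ge> k"
    proof (rule ccontr)
      assume "\<not> m \<ge> k" then have "m < k" by simp
      then have "sq b k = sq b m" using m less by simp
      then show False using sq_inj[OF b] \<open>m < k\<close> by blast
    qed
    moreover have "m' \<ge> k"
    proof (rule ccontr)
      assume "\<not> m' \<ge> k" then have "m' < k" by simp
      then have "sq a k = sq a m'" using m' less by simp
      then show False using sq_inj[OF a] \<open>m' < k\<close> by blast
    qed
    ultimately show ?case using sq_le[OF a] sq_le[OF b] m m' by (metis order_antisym)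
  qed
  then show ?thesis unfolding sq_def by (auto simp: fun_eq_iff)
qed

lemma between_notin:
  assumes a: "is_partition a" and "sq a (Suc k) < x" "x < sq a k"
  shows "x \<notin> R a"
proof
  assume "x \<in> R a" then obtain m where m: "x = sq a m" unfolding R_def by auto
  show False
  proof (cases "m \<le> k")
    case True then show False using sq_le[OF a True] m assms by simp
  next
    case False then have sk: "Suc k \<le> m" by simp
    show False using sq_le[OF a sk] m assms by simp
  qed
qed

lemma R_update:
  assumes a: "is_partition a" and "0 < a k"
  shows "R (a(k := a k - 1)) = insert (sq a k - 1) (R a - {sq a k})"
proof -
  have s: "sq (a(k := a k - 1)) = (sq a)(k := sq a k - 1)"
    using assms(2) by (auto simp: sq_def of_nat_diff fun_eq_iff)
  have inj: "inj (sq a)" using sq_inj[OF a] by (auto intro: injI)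
  have "range ((sq a)(k := sq a k - 1)) = insert (sq a k - 1) (sq a ` (UNIV - {k}))"
    by auto
  also have "sq a ` (UNIV - {k}) = range (sq a) - {sq a k}"
    using inj by (simp add: image_set_diff)
  finally show ?thesis unfolding R_def s .
qed

lemma rem_box_char:
  assumes a: "is_partition a" and b: "is_partition b"
  shows "b \<in> rem_box a \<longleftrightarrow> (\<exists>j. j \<notin> R a \<and> j + 1 \<in> R a \<and> R b = insert j (R a - {j+1}))"
proof
  assume "b \<in> rem_box a"
  then obtain k where k: "0 < a k" "b = a(k := a k - 1)" unfolding rem_box_def by auto
  have "b (Suc k) \<le> b k" using b unfolding is_partition_def by blast
  then have "a (Suc k) \<le> a k - 1" using k by simp
  then have "sq a (Suc k) < sq a k - 1" using k(1) by (simp add: sq_def of_nat_diff)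
  then have "sq a k - 1 \<notin> R a" using between_notin[OF a] by simp
  moreover have "sq a k - 1 + 1 \<in> R a" by (simp add: R_def)
  ultimately show "\<exists>j. j \<notin> R a \<and> j + 1 \<in> R a \<and> R b = insert j (R a - {j+1})"
    using R_update[OF a k(1)] k(2) by (intro exI[of _ "sq a k - 1"]) simp
next
  assume "\<exists>j. j \<notin> R a \<and> j + 1 \<in> R a \<and> R b = insert j (R a - {j+1})"
  then obtain j where j: "j \<notin> R a" "j + 1 \<in> R a" "R b = insert j (R a - {j+1})" by blast
  obtain k where k: "sq a k = j + 1" using j(2) unfolding R_def by auto
  have ak: "0 < a k"
  proof (rule ccontr)
    assume "\<not> 0 < a k" then have "a k = 0" by simp
    moreover have "a (Suc k) \<le> a k" using a unfolding is_partition_def by blast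
    ultimately have "sq a (Suc k) = j" using k by (simp add: sq_def)
    then show False using j(1) by (auto simp: R_def)
  qed
  have lt: "a (Suc k) < a k"
  proof (rule ccontr)
    assume "\<not> a (Suc k) < a k"
    then have "a (Suc k) = a k" using a unfolding is_partition_def by (metis le_less)
    then have "sq a (Suc k) = j" using k by (simp add: sq_def)
    then show False using j(1) by (auto simp: R_def)
  qed
  define b' where "b' = a(k := a k - 1)"
  have pb': "is_partition b'"
    unfolding is_partition_def
  proof
    show "\<forall>i. b' (Suc i) \<le> b' i"
    proof
      fix i
      have "a (Suc i) \<le> a i" using a unfolding is_partition_def by blast
      then show "b' (Suc i) \<le> b' i" using lt by (auto simp: b'_def)
    qed
    have "{i. b' i \<noteq> 0} \<subseteq> {i. a i \<noteq> 0}" by (auto simp: b'_def split: if_splits)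
    then show "finite {i. b' i \<noteq> 0}" using a unfolding is_partition_def by (meson finite_subset)
  qed
  have "R b' = R b" using R_update[OF a ak] j(3) k by (simp add: b'_def)
  then have "b = b'" using R_inj[OF pb' b] by simp
  then show "b \<in> rem_box a" using b ak unfolding rem_box_def b'_def by blast
qed

lemma add_rem:
  assumes a: "is_partition a" and b: "is_partition b"
  shows "b \<in> add_box a \<longleftrightarrow> a \<in> rem_box b"
proof
  assume "b \<in> add_box a"
  then obtain k where "b = a(k := Suc (a k))" unfolding add_box_def by auto
  then show "a \<in> rem_box b" using a unfolding rem_box_def
    by (auto intro!: exI[of _ k] simp: fun_eq_iff)
next
  assume "a \<in> rem_box b"
  then obtain k where "0 < b k" "a = b(k := b k - 1)" unfolding rem_box_def by auto
  then show "b \<in> add_box a" using b unfolding add_box_def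
    by (auto intro!: exI[of _ k] simp: fun_eq_iff)
qed

lemma I_wedge_R: "I_wedge l = R (fst l)"
proof -
  have "I_wedge l = (\<lambda>i. int (fst l (i - 1)) - (int i - 1)) ` {i. i \<ge> 1}"
    unfolding I_wedge_def by auto
  also have "\<dots> = (\<lambda>i. sq (fst l) (i - 1)) ` {i. i \<ge> 1}"
    by (rule image_cong) (auto simp: sq_def of_nat_diff)
  also have "\<dots> = sq (fst l) ` ((\<lambda>i. i - 1) ` {i. i \<ge> 1})"
    by (simp add: image_image)
  also have "(\<lambda>i. i - 1) ` {i::nat. i \<ge> 1} = UNIV"
    by (auto simp: image_iff intro!: exI[of _ "Suc _"])
  also have "sq (fst l) ` UNIV = R (fst l)" by (simp add: R_def)
  finally show ?thesis .
qed

lemma I_vee_R: "I_vee l d = (\<lambda>x. 1 - d - x) ` R (snd l)"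
proof -
  have "I_vee l d = (\<lambda>i. int i - d - int (snd l (i - 1))) ` {i. i \<ge> 1}"
    unfolding I_vee_def by auto
  also have "\<dots> = (\<lambda>x. 1 - d - x) ` ((\<lambda>i. int (snd l (i - 1)) - (int i - 1)) ` {i. i \<ge> 1})"
    unfolding image_image by (rule image_cong) auto
  also have "(\<lambda>i. int (snd l (i - 1)) - (int i - 1)) ` {i. i \<ge> 1} = I_wedge (snd l, snd l)"
    unfolding I_wedge_def by auto
  finally show ?thesis unfolding I_wedge_R by simp
qed

definition wd :: "int set \<Rightarrow> int set \<Rightarrow> int \<Rightarrow> label" where
  "wd W V j = (if j \<in> W \<and> j \<in> V then Cross else if j \<in> W then Wedge
      else if j \<in> V then Vee else Circ)"

lemma wd_eq: "weight_diagram l d = wd (I_wedge l) (I_vee l d)"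
  by (simp add: fun_eq_iff weight_diagram_def wd_def)

lemma wd_eq_iff: "wd W V k = wd W' V' k \<longleftrightarrow> ((k \<in> W) = (k \<in> W') \<and> (k \<in> V) = (k \<in> V'))"
  by (auto simp: wd_def)

lemma lab_bullet:
  "(\<exists>j::int. (\<forall>k. k \<noteq> j \<and> k \<noteq> j + 1 \<longrightarrow> wd Wl Vl k = wd Wm Vm k) \<and>
     ((wd Wm Vm j, wd Wm Vm (j+1), wd Wl Vl j, wd Wl Vl (j+1))
        \<in> {(Cross, Circ, Vee, Wedge), (Wedge, Circ, Circ, Wedge),
           (Cross, Vee, Vee, Cross), (Wedge, Vee, Circ, Cross)}))
   \<longleftrightarrow> (\<exists>j. Vl = Vm \<and> j \<notin> Wl \<and> j + 1 \<in> Wl \<and> Wm = insert j (Wl - {j+1}))"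
proof -
  have t: "((wd Wm Vm j, wd Wm Vm (j+1), wd Wl Vl j, wd Wl Vl (j+1))
        \<in> {(Cross, Circ, Vee, Wedge), (Wedge, Circ, Circ, Wedge),
           (Cross, Vee, Vee, Cross), (Wedge, Vee, Circ, Cross)}) \<longleftrightarrow>
     (j \<in> Wm \<and> j+1 \<notin> Wm \<and> j \<notin> Wl \<and> j+1 \<in> Wl \<and> (j \<in> Vm) = (j \<in> Vl) \<and> (j+1 \<in> Vm) = (j+1 \<in> Vl))"
    for j by (auto simp: wd_def)
  show ?thesis unfolding t wd_eq_iff
  proof (intro iff_exI)
    fix j :: int
    show "((\<forall>k. k \<noteq> j \<and> k \<noteq> j + 1 \<longrightarrow> (k \<in> Wl) = (k \<in> Wm) \<and> (k \<in> Vl) = (k \<in> Vm)) \<and>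
     j \<in> Wm \<and> j + 1 \<notin> Wm \<and> j \<notin> Wl \<and> j + 1 \<in> Wl \<and> (j \<in> Vm) = (j \<in> Vl) \<and> (j + 1 \<in> Vm) = (j + 1 \<in> Vl)) =
    (Vl = Vm \<and> j \<notin> Wl \<and> j + 1 \<in> Wl \<and> Wm = insert j (Wl - {j + 1}))"
      by (auto simp: set_eq_iff)
  qed
qed

lemma lab_circ:
  "(\<exists>j::int. (\<forall>k. k \<noteq> j \<and> k \<noteq> j + 1 \<longrightarrow> wd Wl Vl k = wd Wm Vm k) \<and>
     ((wd Wm Vm j, wd Wm Vm (j+1), wd Wl Vl j, wd Wl Vl (j+1))
        \<in> {(Circ, Cross, Vee, Wedge), (Circ, Vee, Vee, Circ),
              (Wedge, Cross, Cross, Wedge), (Wedge, Vee, Cross, Circ)}))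
   \<longleftrightarrow> (\<exists>j. Wl = Wm \<and> j \<in> Vl \<and> j + 1 \<notin> Vl \<and> Vm = insert (j+1) (Vl - {j}))"
proof -
  have t: "((wd Wm Vm j, wd Wm Vm (j+1), wd Wl Vl j, wd Wl Vl (j+1))
        \<in> {(Circ, Cross, Vee, Wedge), (Circ, Vee, Vee, Circ),
              (Wedge, Cross, Cross, Wedge), (Wedge, Vee, Cross, Circ)}) \<longleftrightarrow>
     (j \<notin> Vm \<and> j+1 \<in> Vm \<and> j \<in> Vl \<and> j+1 \<notin> Vl \<and> (j \<in> Wm) = (j \<in> Wl) \<and> (j+1 \<in> Wm) = (j+1 \<in> Wl))"
    for j by (auto simp: wd_def)
  show ?thesis unfolding t wd_eq_iff
  proof (intro iff_exI)
    fix j :: int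
    show "((\<forall>k. k \<noteq> j \<and> k \<noteq> j + 1 \<longrightarrow> (k \<in> Wl) = (k \<in> Wm) \<and> (k \<in> Vl) = (k \<in> Vm)) \<and>
     j \<notin> Vm \<and> j+1 \<in> Vm \<and> j \<in> Vl \<and> j+1 \<notin> Vl \<and> (j \<in> Wm) = (j \<in> Wl) \<and> (j+1 \<in> Wm) = (j+1 \<in> Wl)) =
    (Wl = Wm \<and> j \<in> Vl \<and> j + 1 \<notin> Vl \<and> Vm = insert (j+1) (Vl - {j}))"
      by (auto simp: set_eq_iff)
  qed
qed

lemma mem_refl_image: "x \<in> (\<lambda>y. c - y) ` S \<longleftrightarrow> (c::int) - x \<in> S"
proof
  assume "x \<in> (\<lambda>y. c - y) ` S"
  then obtain y where "y \<in> S" "x = c - y" by auto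
  then show "c - x \<in> S" by simp
next
  assume "c - x \<in> S"
  then have "c - (c - x) \<in> (\<lambda>y. c - y) ` S" by (rule imageI)
  then show "x \<in> (\<lambda>y. c - y) ` S" by simp
qed

lemma refl_shift:
  fixes c :: int
  shows "(\<exists>j. j \<in> (\<lambda>y. c - y) ` A \<and> j + 1 \<notin> (\<lambda>y. c - y) ` A \<and>
        (\<lambda>y. c - y) ` B = insert (j+1) ((\<lambda>y. c - y) ` A - {j}))
   \<longleftrightarrow> (\<exists>j. j \<notin> A \<and> j + 1 \<in> A \<and> B = insert j (A - {j+1}))" (is "?L \<longleftrightarrow> ?R")
proof
  assume ?L
  then obtain j where j0: "j \<in> (\<lambda>y. c - y) ` A" "j + 1 \<notin> (\<lambda>y. c - y) ` A"
        "(\<lambda>y. c - y) ` B = insert (j+1) ((\<lambda>y. c - y) ` A - {j})" by blast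
  have j: "c - j \<in> A" "c - (j+1) \<notin> A"
     "\<forall>x. (c - x \<in> B) = (x = j + 1 \<or> (c - x \<in> A \<and> x \<noteq> j))"
    using j0 unfolding set_eq_iff by (simp_all add: mem_refl_image)
  have "B = insert (c - (j+1)) (A - {c - (j+1) + 1})"
  proof (rule set_eqI)
    fix y show "y \<in> B \<longleftrightarrow> y \<in> insert (c - (j+1)) (A - {c - (j+1) + 1})"
      using j(3)[rule_format, of "c - y"] by auto
  qed
  then show ?R using j by (intro exI[of _ "c - (j+1)"]) auto
next
  assume ?R
  then obtain j where j: "j \<notin> A" "j + 1 \<in> A" "B = insert j (A - {j+1})" by blast
  show ?L
  proof (intro exI[of _ "c - (j+1)"] conjI)
    show "c - (j+1) \<in> (\<lambda>y. c - y) ` A" using j by (simp add: mem_refl_image)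
    show "c - (j+1) + 1 \<notin> (\<lambda>y. c - y) ` A" using j by (simp add: mem_refl_image)
    show "(\<lambda>y. c - y) ` B = insert (c - (j + 1) + 1) ((\<lambda>y. c - y) ` A - {c - (j + 1)})"
      by (rule set_eqI) (auto simp: mem_refl_image j(3))
  qed
qed

lemma refl_inj: "((\<lambda>y. c - y) ` A = (\<lambda>y. (c::int) - y) ` B) \<longleftrightarrow> A = B"
proof
  assume h: "(\<lambda>y. c - y) ` A = (\<lambda>y. c - y) ` B"
  have "(\<lambda>y. c - y) ` ((\<lambda>y. c - y) ` A) = (\<lambda>y. c - y) ` ((\<lambda>y. c - y) ` B)"
    using h by simp
  then show "A = B" by (simp add: image_image)
qed simp

theorem proposition2p1:
  fixes \<delta> :: int and lam mu :: bipartition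
  assumes "is_bipartition lam" and "is_bipartition mu"
  shows
   "(mu \<in> Rem_bullet lam \<longleftrightarrow>
      (\<exists>j::int. (\<forall>k. k \<noteq> j \<and> k \<noteq> j + 1 \<longrightarrow> weight_diagram lam \<delta> k = weight_diagram mu \<delta> k) \<and>
        ((weight_diagram mu \<delta> j, weight_diagram mu \<delta> (j+1), weight_diagram lam \<delta> j, weight_diagram lam \<delta> (j+1))
           \<in> {(Cross, Circ, Vee, Wedge), (Wedge, Circ, Circ, Wedge),
              (Cross, Vee, Vee, Cross), (Wedge, Vee, Circ, Cross)})))
    \<and> (lam \<in> Add_bullet mu \<longleftrightarrow> mu \<in> Rem_bullet lam)
    \<and> (mu \<in> Rem_circ lam \<longleftrightarrow>
      (\<exists>j::int. (\<forall>k. k \<noteq> j \<and> k \<noteq> j + 1 \<longrightarrow> weight_diagram lam \<delta> k = weight_diagram mu \<delta> k) \<and>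
        ((weight_diagram mu \<delta> j, weight_diagram mu \<delta> (j+1), weight_diagram lam \<delta> j, weight_diagram lam \<delta> (j+1))
           \<in> {(Circ, Cross, Vee, Wedge), (Circ, Vee, Vee, Circ),
              (Wedge, Cross, Cross, Wedge), (Wedge, Vee, Cross, Circ)})))
    \<and> (lam \<in> Add_circ mu \<longleftrightarrow> mu \<in> Rem_circ lam)"
  proof -
  have la: "is_partition (fst lam)" "is_partition (snd lam)"
    and mu: "is_partition (fst mu)" "is_partition (snd mu)"
    using assms unfolding is_bipartition_def by auto
  have veq: "I_vee lam \<delta> = I_vee mu \<delta> \<longleftrightarrow> snd lam = snd mu"
  proof -
    have "I_vee lam \<delta> = I_vee mu \<delta> \<longleftrightarrow> R (snd lam) = R (snd mu)"
      by (simp only: I_vee_R refl_inj)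
    also have "\<dots> \<longleftrightarrow> snd lam = snd mu" using R_inj[OF la(2) mu(2)] by auto
    finally show ?thesis .
  qed
  have weq: "I_wedge lam = I_wedge mu \<longleftrightarrow> fst lam = fst mu"
    unfolding I_wedge_R using R_inj[OF la(1) mu(1)] by auto
  have rb: "mu \<in> Rem_bullet lam \<longleftrightarrow> snd lam = snd mu \<and> fst mu \<in> rem_box (fst lam)"
    unfolding Rem_bullet_def by (cases mu) auto
  have ab: "lam \<in> Add_bullet mu \<longleftrightarrow> snd lam = snd mu \<and> fst lam \<in> add_box (fst mu)"
    unfolding Add_bullet_def by (cases lam) auto
  have rc: "mu \<in> Rem_circ lam \<longleftrightarrow> fst lam = fst mu \<and> snd mu \<in> rem_box (snd lam)"
    unfolding Rem_circ_def by (cases mu) auto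
  have ac: "lam \<in> Add_circ mu \<longleftrightarrow> fst lam = fst mu \<and> snd lam \<in> add_box (snd mu)"
    unfolding Add_circ_def by (cases lam) auto
  have A1: "mu \<in> Rem_bullet lam \<longleftrightarrow> (\<exists>j. I_vee lam \<delta> = I_vee mu \<delta> \<and> j \<notin> I_wedge lam \<and> j + 1 \<in> I_wedge lam \<and> I_wedge mu = insert j (I_wedge lam - {j+1}))"
    unfolding rb veq rem_box_char[OF la(1) mu(1)] I_wedge_R by blast
  have A2: "mu \<in> Rem_circ lam \<longleftrightarrow> (\<exists>j. I_wedge lam = I_wedge mu \<and> j \<in> I_vee lam \<delta> \<and> j + 1 \<notin> I_vee lam \<delta> \<and> I_vee mu \<delta> = insert (j+1) (I_vee lam \<delta> - {j}))"
  proof -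
    have "(\<exists>j. j \<in> I_vee lam \<delta> \<and> j + 1 \<notin> I_vee lam \<delta> \<and> I_vee mu \<delta> = insert (j+1) (I_vee lam \<delta> - {j}))
       \<longleftrightarrow> snd mu \<in> rem_box (snd lam)"
      unfolding I_vee_R refl_shift rem_box_char[OF la(2) mu(2)] by blast
    then show ?thesis unfolding rc weq by blast
  qed
  have B1: "lam \<in> Add_bullet mu \<longleftrightarrow> mu \<in> Rem_bullet lam"
    unfolding ab rb add_rem[OF mu(1) la(1)] by blast
  have B2: "lam \<in> Add_circ mu \<longleftrightarrow> mu \<in> Rem_circ lam"
    unfolding ac rc add_rem[OF mu(2) la(2)] by blast
  show ?thesis
    unfolding wd_eq lab_bullet lab_circ
    using A1 A2 B1 B2 by (simp only:)
qed

end
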